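(* Let $Q$ be a power associative loop such that the factor loop $Q/Z(Q)$ is a cyclic group. Then $Q$ is an abelian group. *)

theory Defs
  imports "HOL-Algebra.Generated_Groups"
begin

definition loop :: "'a monoid \<Rightarrow> bool" where
  "loop Q \<longleftrightarrow>
     \<one>\<^bsub>Q\<^esub> \<in> carrier Q \<and>
     (\<forall>a\<in>carrier Q. \<forall>b\<in>carrier Q. a \<otimes>\<^bsub>Q\<^esub> b \<in> carrier Q) \<and>
     (\<forall>a\<in>carrier Q. \<one>\<^bsub>Q\<^esub> \<otimes>\<^bsub>Q\<^esub> a = a \<and> a \<otimes>\<^bsub>Q\<^esub> \<one>\<^bsub>Q\<^esub> = a) \<and>
     (\<forall>a\<in>carrier Q. \<forall>b\<in>carrier Q. \<exists>!x. x \<in> carrier Q \<and> a \<otimes>\<^bsub>Q\<^esub> x = b) \<and>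
     (\<forall>a\<in>carrier Q. \<forall>b\<in>carrier Q. \<exists>!y. y \<in> carrier Q \<and> y \<otimes>\<^bsub>Q\<^esub> a = b)"

definition ldiv :: "'a monoid \<Rightarrow> 'a \<Rightarrow> 'a \<Rightarrow> 'a" where
  "ldiv Q a b = (THE x. x \<in> carrier Q \<and> a \<otimes>\<^bsub>Q\<^esub> x = b)"

definition rdiv :: "'a monoid \<Rightarrow> 'a \<Rightarrow> 'a \<Rightarrow> 'a" where
  "rdiv Q b a = (THE y. y \<in> carrier Q \<and> y \<otimes>\<^bsub>Q\<^esub> a = b)"

inductive_set subloop_gen :: "'a monoid \<Rightarrow> 'a set \<Rightarrow> 'a set" for Q S where
  one: "\<one>\<^bsub>Q\<^esub> \<in> subloop_gen Q S"
| incl: "s \<in> S \<Longrightarrow> s \<in> subloop_gen Q S"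
| mult: "a \<in> subloop_gen Q S \<Longrightarrow> b \<in> subloop_gen Q S \<Longrightarrow> a \<otimes>\<^bsub>Q\<^esub> b \<in> subloop_gen Q S"
| ldiv: "a \<in> subloop_gen Q S \<Longrightarrow> b \<in> subloop_gen Q S \<Longrightarrow> ldiv Q a b \<in> subloop_gen Q S"
| rdiv: "a \<in> subloop_gen Q S \<Longrightarrow> b \<in> subloop_gen Q S \<Longrightarrow> rdiv Q b a \<in> subloop_gen Q S"

definition power_associative :: "'a monoid \<Rightarrow> bool" where
  "power_associative Q \<longleftrightarrow>
     (\<forall>x\<in>carrier Q. \<forall>a\<in>subloop_gen Q {x}. \<forall>b\<in>subloop_gen Q {x}. \<forall>c\<in>subloop_gen Q {x}.
        (a \<otimes>\<^bsub>Q\<^esub> b) \<otimes>\<^bsub>Q\<^esub> c = a \<otimes>\<^bsub>Q\<^esub> (b \<otimes>\<^bsub>Q\<^esub> c))"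

definition loop_center :: "'a monoid \<Rightarrow> 'a set" where
  "loop_center Q = {a \<in> carrier Q. \<forall>x\<in>carrier Q. \<forall>y\<in>carrier Q.
      a \<otimes>\<^bsub>Q\<^esub> x = x \<otimes>\<^bsub>Q\<^esub> a \<and>
      (a \<otimes>\<^bsub>Q\<^esub> x) \<otimes>\<^bsub>Q\<^esub> y = a \<otimes>\<^bsub>Q\<^esub> (x \<otimes>\<^bsub>Q\<^esub> y) \<and>
      (x \<otimes>\<^bsub>Q\<^esub> a) \<otimes>\<^bsub>Q\<^esub> y = x \<otimes>\<^bsub>Q\<^esub> (a \<otimes>\<^bsub>Q\<^esub> y) \<and>
      (x \<otimes>\<^bsub>Q\<^esub> y) \<otimes>\<^bsub>Q\<^esub> a = x \<otimes>\<^bsub>Q\<^esub> (y \<otimes>\<^bsub>Q\<^esub> a)}"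

definition lcoset :: "'a monoid \<Rightarrow> 'a \<Rightarrow> 'a set \<Rightarrow> 'a set" where
  "lcoset Q a N = {a \<otimes>\<^bsub>Q\<^esub> n | n. n \<in> N}"

definition factor_loop :: "'a monoid \<Rightarrow> 'a set \<Rightarrow> 'a set monoid" where
  "factor_loop Q N =
     \<lparr> carrier = {lcoset Q a N | a. a \<in> carrier Q},
       mult = (\<lambda>A B. lcoset Q ((SOME a. a \<in> A \<inter> carrier Q) \<otimes>\<^bsub>Q\<^esub> (SOME b. b \<in> B \<inter> carrier Q)) N),
       one = lcoset Q \<one>\<^bsub>Q\<^esub> N \<rparr>"

definition cyclic_group :: "('a, 'b) monoid_scheme \<Rightarrow> bool" where
  "cyclic_group G \<longleftrightarrow> group G \<and> (\<exists>g\<in>carrier G. carrier G = generate G {g})"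

end

theory Submission
  imports Defs
begin

lemma ex1_eq: "\<exists>!u. P u \<Longrightarrow> P x \<Longrightarrow> P y \<Longrightarrow> x = y" by blast

context
  fixes Q :: "'a monoid" (structure)
  assumes L: "loop Q"
begin

lemma LD1: "\<one> \<in> carrier Q"
  using L unfolding loop_def by (elim conjE) assumption
lemma LD2: "\<forall>a\<in>carrier Q. \<forall>b\<in>carrier Q. a \<otimes> b \<in> carrier Q"
  using L unfolding loop_def by (elim conjE) assumption
lemma LD3: "\<forall>a\<in>carrier Q. \<one> \<otimes> a = a \<and> a \<otimes> \<one> = a"
  using L unfolding loop_def by (elim conjE) assumption
lemma LD4: "\<forall>a\<in>carrier Q. \<forall>b\<in>carrier Q. \<exists>!x. x \<in> carrier Q \<and> a \<otimes> x = b"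
  using L unfolding loop_def by (elim conjE) assumption
lemma LD5: "\<forall>a\<in>carrier Q. \<forall>b\<in>carrier Q. \<exists>!y. y \<in> carrier Q \<and> y \<otimes> a = b"
  using L unfolding loop_def by (elim conjE) assumption
lemmas LD = LD1 LD2 LD3 LD4 LD5
lemma one_cl: "\<one> \<in> carrier Q" by (rule LD(1))
lemma m_cl: "a \<in> carrier Q \<Longrightarrow> b \<in> carrier Q \<Longrightarrow> a \<otimes> b \<in> carrier Q"
  using LD(2) by blast
lemma l_one': "a \<in> carrier Q \<Longrightarrow> \<one> \<otimes> a = a" using LD(3) by blast
lemma r_one': "a \<in> carrier Q \<Longrightarrow> a \<otimes> \<one> = a" using LD(3) by blast
lemma lcanc: "a \<in> carrier Q \<Longrightarrow> x \<in> carrier Q \<Longrightarrow> y \<in> carrier Q \<Longrightarrow> a \<otimes> x = a \<otimes> y \<Longrightarrow> x = y"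
proof -
  assume a: "a \<in> carrier Q" "x \<in> carrier Q" "y \<in> carrier Q" "a \<otimes> x = a \<otimes> y"
  have "\<exists>!u. u \<in> carrier Q \<and> a \<otimes> u = a \<otimes> x" by (rule bspec[OF bspec[OF LD(4) a(1)] m_cl[OF a(1) a(2)]])
  then show ?thesis by (rule ex1_eq) (use a in auto)
qed
lemma rcanc: "a \<in> carrier Q \<Longrightarrow> x \<in> carrier Q \<Longrightarrow> y \<in> carrier Q \<Longrightarrow> x \<otimes> a = y \<otimes> a \<Longrightarrow> x = y"
proof -
  assume a: "a \<in> carrier Q" "x \<in> carrier Q" "y \<in> carrier Q" "x \<otimes> a = y \<otimes> a"
  have "\<exists>!u. u \<in> carrier Q \<and> u \<otimes> a = x \<otimes> a" by (rule bspec[OF bspec[OF LD(5) a(1)] m_cl[OF a(2) a(1)]])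
  then show ?thesis by (rule ex1_eq) (use a in auto)
qed
lemma ldiv_prop: "a \<in> carrier Q \<Longrightarrow> b \<in> carrier Q \<Longrightarrow> ldiv Q a b \<in> carrier Q \<and> a \<otimes> ldiv Q a b = b"
proof -
  assume a: "a \<in> carrier Q" "b \<in> carrier Q"
  have "\<exists>!u. u \<in> carrier Q \<and> a \<otimes> u = b" by (rule bspec[OF bspec[OF LD(4) a(1)] a(2)])
  then show ?thesis unfolding ldiv_def by (rule theI')
qed
lemma rdiv_prop: "a \<in> carrier Q \<Longrightarrow> b \<in> carrier Q \<Longrightarrow> rdiv Q b a \<in> carrier Q \<and> rdiv Q b a \<otimes> a = b"
proof -
  assume a: "a \<in> carrier Q" "b \<in> carrier Q"
  have "\<exists>!u. u \<in> carrier Q \<and> u \<otimes> a = b" by (rule bspec[OF bspec[OF LD(5) a(1)] a(2)])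
  then show ?thesis unfolding rdiv_def by (rule theI')
qed

lemma Zc: "z \<in> loop_center Q \<Longrightarrow> z \<in> carrier Q" unfolding loop_center_def by blast
lemma Zcomm: "z \<in> loop_center Q \<Longrightarrow> x \<in> carrier Q \<Longrightarrow> z \<otimes> x = x \<otimes> z"
  unfolding loop_center_def using one_cl by blast
lemma Zl: "z \<in> loop_center Q \<Longrightarrow> x \<in> carrier Q \<Longrightarrow> y \<in> carrier Q \<Longrightarrow> (z \<otimes> x) \<otimes> y = z \<otimes> (x \<otimes> y)"
  unfolding loop_center_def by blast
lemma Zm: "z \<in> loop_center Q \<Longrightarrow> x \<in> carrier Q \<Longrightarrow> y \<in> carrier Q \<Longrightarrow> (x \<otimes> z) \<otimes> y = x \<otimes> (z \<otimes> y)"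
  unfolding loop_center_def by blast
lemma Zr: "z \<in> loop_center Q \<Longrightarrow> x \<in> carrier Q \<Longrightarrow> y \<in> carrier Q \<Longrightarrow> (x \<otimes> y) \<otimes> z = x \<otimes> (y \<otimes> z)"
  unfolding loop_center_def by blast
lemma Zone: "\<one> \<in> loop_center Q"
  unfolding loop_center_def using one_cl l_one' r_one' m_cl by auto

lemma Zmult: assumes z1: "z1 \<in> loop_center Q" and z2: "z2 \<in> loop_center Q"
  shows "z1 \<otimes> z2 \<in> loop_center Q"
proof -
  have c1: "z1 \<in> carrier Q" and c2: "z2 \<in> carrier Q" using z1 z2 Zc by auto
  have "z1 \<otimes> z2 \<otimes> x = x \<otimes> (z1 \<otimes> z2) \<and>
      z1 \<otimes> z2 \<otimes> x \<otimes> y = z1 \<otimes> z2 \<otimes> (x \<otimes> y) \<and>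
      x \<otimes> (z1 \<otimes> z2) \<otimes> y = x \<otimes> (z1 \<otimes> z2 \<otimes> y) \<and>
      x \<otimes> y \<otimes> (z1 \<otimes> z2) = x \<otimes> (y \<otimes> (z1 \<otimes> z2))"
    if x: "x \<in> carrier Q" and y: "y \<in> carrier Q" for x y
  proof (intro conjI)
    show "z1 \<otimes> z2 \<otimes> x = x \<otimes> (z1 \<otimes> z2)"
      using Zl[OF z1 c2 x] Zcomm[OF z2 x] Zl[OF z1 x c2] Zcomm[OF z1 x] Zm[OF z1 x c2] by simp
    show "z1 \<otimes> z2 \<otimes> x \<otimes> y = z1 \<otimes> z2 \<otimes> (x \<otimes> y)"
      using Zl[OF z1 c2 x] Zl[OF z1 m_cl[OF c2 x] y] Zl[OF z2 x y] Zl[OF z1 c2 m_cl[OF x y]] by simp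
    show "x \<otimes> (z1 \<otimes> z2) \<otimes> y = x \<otimes> (z1 \<otimes> z2 \<otimes> y)"
      using Zr[OF z2 x c1] Zm[OF z2 m_cl[OF x c1] y] Zm[OF z1 x m_cl[OF c2 y]] Zl[OF z1 c2 y] by simp
    show "x \<otimes> y \<otimes> (z1 \<otimes> z2) = x \<otimes> (y \<otimes> (z1 \<otimes> z2))"
      using Zr[OF z2 m_cl[OF x y] c1] Zr[OF z1 x y] Zr[OF z2 x m_cl[OF y c1]] Zr[OF z2 y c1] by simp
  qed
  then show ?thesis unfolding loop_center_def using m_cl[OF c1 c2] by blast
qed

lemma Zinv: assumes z: "z \<in> loop_center Q" and w: "w \<in> carrier Q" and zw: "z \<otimes> w = \<one>"
  shows "w \<in> loop_center Q"
proof -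
  have c: "z \<in> carrier Q" using z Zc by auto
  have "w \<otimes> x = x \<otimes> w \<and> w \<otimes> x \<otimes> y = w \<otimes> (x \<otimes> y) \<and>
      x \<otimes> w \<otimes> y = x \<otimes> (w \<otimes> y) \<and> x \<otimes> y \<otimes> w = x \<otimes> (y \<otimes> w)"
    if x: "x \<in> carrier Q" and y: "y \<in> carrier Q" for x y
  proof (intro conjI)
    have "z \<otimes> (w \<otimes> x) = x" using Zl[OF z w x] zw l_one' x by simp
    moreover have "z \<otimes> (x \<otimes> w) = x"
      using Zl[OF z x w] Zcomm[OF z x] Zm[OF z x w] zw r_one' x by simp
    ultimately show "w \<otimes> x = x \<otimes> w" using lcanc[OF c m_cl[OF w x] m_cl[OF x w]] by simp
    have "z \<otimes> (w \<otimes> x \<otimes> y) = x \<otimes> y" using Zl[OF z m_cl[OF w x] y] Zl[OF z w x] zw l_one' x by simp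
    moreover have "z \<otimes> (w \<otimes> (x \<otimes> y)) = x \<otimes> y" using Zl[OF z w m_cl[OF x y]] zw l_one' m_cl[OF x y] by simp
    ultimately show "w \<otimes> x \<otimes> y = w \<otimes> (x \<otimes> y)"
      using lcanc[OF c m_cl[OF m_cl[OF w x] y] m_cl[OF w m_cl[OF x y]]] by simp
    have "z \<otimes> (x \<otimes> w \<otimes> y) = x \<otimes> y"
      using Zl[OF z m_cl[OF x w] y] Zl[OF z x w] Zcomm[OF z x] Zm[OF z x w] zw r_one' x by simp
    moreover have "z \<otimes> (x \<otimes> (w \<otimes> y)) = x \<otimes> y"
      using Zl[OF z x m_cl[OF w y]] Zcomm[OF z x] Zm[OF z x m_cl[OF w y]] Zl[OF z w y] zw l_one' y by simp
    ultimately show "x \<otimes> w \<otimes> y = x \<otimes> (w \<otimes> y)"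
      using lcanc[OF c m_cl[OF m_cl[OF x w] y] m_cl[OF x m_cl[OF w y]]] by simp
    have "z \<otimes> (x \<otimes> y \<otimes> w) = x \<otimes> y"
      using Zl[OF z m_cl[OF x y] w] Zcomm[OF z m_cl[OF x y]] Zm[OF z m_cl[OF x y] w] zw r_one' m_cl[OF x y] by simp
    moreover have "z \<otimes> (x \<otimes> (y \<otimes> w)) = x \<otimes> y"
      using Zl[OF z x m_cl[OF y w]] Zcomm[OF z x] Zm[OF z x m_cl[OF y w]] Zl[OF z y w]
        Zcomm[OF z y] Zm[OF z y w] zw r_one' y by simp
    ultimately show "x \<otimes> y \<otimes> w = x \<otimes> (y \<otimes> w)"
      using lcanc[OF c m_cl[OF m_cl[OF x y] w] m_cl[OF x m_cl[OF y w]]] by simp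
  qed
  then show ?thesis unfolding loop_center_def using w by blast
qed

lemma Zinv_ex: "z \<in> loop_center Q \<Longrightarrow> \<exists>w\<in>loop_center Q. z \<otimes> w = \<one>"
  using ldiv_prop[OF Zc one_cl] Zinv by blast

lemma lcoset_Z: assumes a: "a \<in> carrier Q" and z: "z \<in> loop_center Q"
  shows "lcoset Q (a \<otimes> z) (loop_center Q) = lcoset Q a (loop_center Q)"
proof -
  obtain w where w: "w \<in> loop_center Q" "z \<otimes> w = \<one>" using Zinv_ex[OF z] by blast
  have "x \<in> lcoset Q (a \<otimes> z) (loop_center Q) \<longleftrightarrow> x \<in> lcoset Q a (loop_center Q)" for x
  proof
    assume "x \<in> lcoset Q (a \<otimes> z) (loop_center Q)"
    then obtain n where n: "n \<in> loop_center Q" "x = a \<otimes> z \<otimes> n" unfolding lcoset_def by blast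
    then have "x = a \<otimes> (z \<otimes> n)" using Zm[OF z a Zc[OF n(1)]] by simp
    then show "x \<in> lcoset Q a (loop_center Q)" unfolding lcoset_def using Zmult[OF z n(1)] by blast
  next
    assume "x \<in> lcoset Q a (loop_center Q)"
    then obtain n where n: "n \<in> loop_center Q" "x = a \<otimes> n" unfolding lcoset_def by blast
    have "a \<otimes> z \<otimes> (w \<otimes> n) = a \<otimes> (z \<otimes> (w \<otimes> n))" using Zm[OF z a m_cl[OF Zc[OF w(1)] Zc[OF n(1)]]] .
    also have "z \<otimes> (w \<otimes> n) = n" using Zl[OF z Zc[OF w(1)] Zc[OF n(1)]] w(2) l_one' Zc[OF n(1)] by simp
    finally have "x = a \<otimes> z \<otimes> (w \<otimes> n)" using n by simp
    then show "x \<in> lcoset Q (a \<otimes> z) (loop_center Q)" unfolding lcoset_def using Zmult[OF w(1) n(1)] by blast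
  qed
  then show ?thesis by blast
qed

lemma mult_ZZ: assumes a: "a \<in> carrier Q" and b: "b \<in> carrier Q"
  and z1: "z1 \<in> loop_center Q" and z2: "z2 \<in> loop_center Q"
  shows "(a \<otimes> z1) \<otimes> (b \<otimes> z2) = (a \<otimes> b) \<otimes> (z1 \<otimes> z2)"
proof -
  note c1 = Zc[OF z1] and c2 = Zc[OF z2]
  have "(a \<otimes> z1) \<otimes> (b \<otimes> z2) = a \<otimes> (z1 \<otimes> (b \<otimes> z2))" using Zm[OF z1 a m_cl[OF b c2]] .
  also have "z1 \<otimes> (b \<otimes> z2) = b \<otimes> (z1 \<otimes> z2)"
    using Zl[OF z1 b c2] Zcomm[OF z1 b] Zm[OF z1 b c2] by simp
  also have "a \<otimes> (b \<otimes> (z1 \<otimes> z2)) = (a \<otimes> b) \<otimes> (z1 \<otimes> z2)" using Zr[OF Zmult[OF z1 z2] a b] by simp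
  finally show ?thesis .
qed

lemma lcoset_self: "a \<in> carrier Q \<Longrightarrow> a \<in> lcoset Q a (loop_center Q)"
  unfolding lcoset_def using Zone r_one' by force

lemma lcoset_sub: "a \<in> carrier Q \<Longrightarrow> lcoset Q a (loop_center Q) \<subseteq> carrier Q"
  unfolding lcoset_def using Zc m_cl by blast

lemma F_mult: assumes a: "a \<in> carrier Q" and b: "b \<in> carrier Q"
  shows "lcoset Q a (loop_center Q) \<otimes>\<^bsub>factor_loop Q (loop_center Q)\<^esub> lcoset Q b (loop_center Q)
    = lcoset Q (a \<otimes> b) (loop_center Q)"
proof -
  let ?Z = "loop_center Q"
  define a' where "a' = (SOME x. x \<in> lcoset Q a ?Z \<inter> carrier Q)"
  define b' where "b' = (SOME x. x \<in> lcoset Q b ?Z \<inter> carrier Q)"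
  have "a' \<in> lcoset Q a ?Z" unfolding a'_def by (rule someI2[of _ a]) (use a lcoset_self in auto)
  then obtain z1 where z1: "z1 \<in> ?Z" "a' = a \<otimes> z1" unfolding lcoset_def by blast
  have "b' \<in> lcoset Q b ?Z" unfolding b'_def by (rule someI2[of _ b]) (use b lcoset_self in auto)
  then obtain z2 where z2: "z2 \<in> ?Z" "b' = b \<otimes> z2" unfolding lcoset_def by blast
  have "lcoset Q a ?Z \<otimes>\<^bsub>factor_loop Q ?Z\<^esub> lcoset Q b ?Z = lcoset Q (a' \<otimes> b') ?Z"
    unfolding factor_loop_def a'_def b'_def by simp
  also have "\<dots> = lcoset Q (a \<otimes> b) ?Z"
    using z1 z2 mult_ZZ[OF a b z1(1) z2(1)] lcoset_Z[OF m_cl[OF a b] Zmult[OF z1(1) z2(1)]] by simp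
  finally show ?thesis .
qed

lemma lcoset_eq: "a \<in> carrier Q \<Longrightarrow> b \<in> carrier Q \<Longrightarrow> lcoset Q a (loop_center Q) = lcoset Q b (loop_center Q)
   \<Longrightarrow> \<exists>z\<in>loop_center Q. b = a \<otimes> z"
  using lcoset_self[of b] unfolding lcoset_def by auto

lemma H_sub: assumes g: "g \<in> carrier Q" shows "h \<in> subloop_gen Q {g} \<Longrightarrow> h \<in> carrier Q"
  by (induction rule: subloop_gen.induct) (use g one_cl m_cl ldiv_prop rdiv_prop in auto)

lemma H_assoc: assumes P: "power_associative Q" and g: "g \<in> carrier Q"
  and "a \<in> subloop_gen Q {g}" "b \<in> subloop_gen Q {g}" "c \<in> subloop_gen Q {g}"
  shows "(a \<otimes> b) \<otimes> c = a \<otimes> (b \<otimes> c)"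
  using P g assms unfolding power_associative_def by blast

lemma H_comm_aux: assumes P: "power_associative Q" and g: "g \<in> carrier Q"
  and c: "c \<in> subloop_gen Q {g}" and cg: "g \<otimes> c = c \<otimes> g"
  shows "h \<in> subloop_gen Q {g} \<Longrightarrow> h \<otimes> c = c \<otimes> h"
proof (induction rule: subloop_gen.induct)
  case one
  then show ?case using l_one' r_one' H_sub[OF g c] by simp
next
  case (incl s)
  then show ?case using cg by simp
next
  case (mult a b)
  note A = H_assoc[OF P g]
  have "a \<otimes> b \<otimes> c = a \<otimes> (b \<otimes> c)" by (rule A[OF mult.hyps(1) mult.hyps(2) c])
  also have "\<dots> = a \<otimes> (c \<otimes> b)" by (simp only: mult.IH(2))
  also have "\<dots> = (a \<otimes> c) \<otimes> b" by (rule A[OF mult.hyps(1) c mult.hyps(2), symmetric])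
  also have "\<dots> = (c \<otimes> a) \<otimes> b" by (simp only: mult.IH(1))
  also have "\<dots> = c \<otimes> (a \<otimes> b)" by (rule A[OF c mult.hyps(1) mult.hyps(2)])
  finally show ?case .
next
  case (ldiv a b)
  note A = H_assoc[OF P g]
  have ac: "a \<in> carrier Q" "b \<in> carrier Q" using H_sub[OF g ldiv.hyps(1)] H_sub[OF g ldiv.hyps(2)] by auto
  define x where "x = ldiv Q a b"
  have xH: "x \<in> subloop_gen Q {g}" unfolding x_def by (rule subloop_gen.ldiv[OF ldiv.hyps])
  have xc: "x \<in> carrier Q" and ax: "a \<otimes> x = b" using ldiv_prop[OF ac] x_def by auto
  have "a \<otimes> (x \<otimes> c) = (a \<otimes> x) \<otimes> c" by (rule A[OF ldiv.hyps(1) xH c, symmetric])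
  also have "\<dots> = b \<otimes> c" by (simp only: ax)
  also have "\<dots> = c \<otimes> b" by (rule ldiv.IH(2))
  also have "\<dots> = c \<otimes> (a \<otimes> x)" by (simp only: ax)
  also have "\<dots> = (c \<otimes> a) \<otimes> x" by (rule A[OF c ldiv.hyps(1) xH, symmetric])
  also have "\<dots> = (a \<otimes> c) \<otimes> x" by (simp only: ldiv.IH(1))
  also have "\<dots> = a \<otimes> (c \<otimes> x)" by (rule A[OF ldiv.hyps(1) c xH])
  finally have e: "a \<otimes> (x \<otimes> c) = a \<otimes> (c \<otimes> x)" .
  have "x \<otimes> c = c \<otimes> x"
    by (rule lcanc[OF ac(1) m_cl[OF xc H_sub[OF g c]] m_cl[OF H_sub[OF g c] xc] e])
  then show ?case unfolding x_def .
next
  case (rdiv a b)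
  note A = H_assoc[OF P g]
  have ac: "a \<in> carrier Q" "b \<in> carrier Q" using H_sub[OF g rdiv.hyps(1)] H_sub[OF g rdiv.hyps(2)] by auto
  define y where "y = rdiv Q b a"
  have yH: "y \<in> subloop_gen Q {g}" unfolding y_def by (rule subloop_gen.rdiv[OF rdiv.hyps])
  have yc: "y \<in> carrier Q" and ya: "y \<otimes> a = b" using rdiv_prop[OF ac] y_def by auto
  have "(y \<otimes> c) \<otimes> a = y \<otimes> (c \<otimes> a)" by (rule A[OF yH c rdiv.hyps(1)])
  also have "\<dots> = y \<otimes> (a \<otimes> c)" by (simp only: rdiv.IH(1))
  also have "\<dots> = (y \<otimes> a) \<otimes> c" by (rule A[OF yH rdiv.hyps(1) c, symmetric])
  also have "\<dots> = b \<otimes> c" by (simp only: ya)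
  also have "\<dots> = c \<otimes> b" by (rule rdiv.IH(2))
  also have "\<dots> = c \<otimes> (y \<otimes> a)" by (simp only: ya)
  also have "\<dots> = (c \<otimes> y) \<otimes> a" by (rule A[OF c yH rdiv.hyps(1), symmetric])
  finally have e: "(y \<otimes> c) \<otimes> a = (c \<otimes> y) \<otimes> a" .
  have "y \<otimes> c = c \<otimes> y"
    by (rule rcanc[OF ac(1) m_cl[OF yc H_sub[OF g c]] m_cl[OF H_sub[OF g c] yc] e])
  then show ?case unfolding y_def .
qed

lemma H_comm: assumes P: "power_associative Q" and g: "g \<in> carrier Q"
  and a: "a \<in> subloop_gen Q {g}" and b: "b \<in> subloop_gen Q {g}"
  shows "a \<otimes> b = b \<otimes> a"
proof -
  have gH: "g \<in> subloop_gen Q {g}" by (rule subloop_gen.incl) simp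
  have "g \<otimes> b = b \<otimes> g" using H_comm_aux[OF P g gH refl b] by (rule sym)
  then show ?thesis by (rule H_comm_aux[OF P g b _ a])
qed

end

theorem proposition4p1:
  fixes Q :: "'a monoid"
  assumes "loop Q"
    and "power_associative Q"
    and "cyclic_group (factor_loop Q (loop_center Q))"
  shows "comm_group Q"
proof -
  note L = assms(1) and P = assms(2)
  let ?Z = "loop_center Q"
  let ?F = "factor_loop Q ?Z"
  have grp: "group ?F" using assms(3) unfolding cyclic_group_def by blast
  obtain g' where g': "g' \<in> carrier ?F" "carrier ?F = generate ?F {g'}"
    using assms(3) unfolding cyclic_group_def by blast
  have carF: "carrier ?F = {lcoset Q a ?Z | a. a \<in> carrier Q}" unfolding factor_loop_def by simp
  have oneF: "\<one>\<^bsub>?F\<^esub> = lcoset Q \<one>\<^bsub>Q\<^esub> ?Z" unfolding factor_loop_def by simp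
  obtain g where g: "g \<in> carrier Q" "g' = lcoset Q g ?Z" using g'(1) carF by blast
  let ?H = "subloop_gen Q {g}"
  have gH: "g \<in> ?H" by (rule subloop_gen.incl) simp
  have claim: "A \<in> generate ?F {g'} \<Longrightarrow> \<exists>h\<in>?H. A = lcoset Q h ?Z" for A
  proof (induction rule: generate.induct)
    case one
    show ?case
    proof (rule bexI)
      show "\<one>\<^bsub>?F\<^esub> = lcoset Q \<one>\<^bsub>Q\<^esub> ?Z" by (rule oneF)
      show "\<one>\<^bsub>Q\<^esub> \<in> ?H" by (rule subloop_gen.one)
    qed
  next
    case (incl h)
    then have "h = g'" by simp
    show ?case
    proof (rule bexI)
      show "h = lcoset Q g ?Z" using \<open>h = g'\<close> g(2) by simp
      show "g \<in> ?H" by (rule gH)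
    qed
  next
    case (inv h)
    then have hg: "h = g'" by simp
    define w where "w = rdiv Q \<one>\<^bsub>Q\<^esub> g"
    have wH: "w \<in> ?H" unfolding w_def by (intro subloop_gen.rdiv gH subloop_gen.one)
    have wc: "w \<in> carrier Q" "w \<otimes>\<^bsub>Q\<^esub> g = \<one>\<^bsub>Q\<^esub>" using rdiv_prop[OF L g(1) one_cl[OF L]] w_def by auto
    have e: "lcoset Q w ?Z \<otimes>\<^bsub>?F\<^esub> g' = \<one>\<^bsub>?F\<^esub>"
      unfolding g(2) oneF F_mult[OF L wc(1) g(1)] wc(2) ..
    have m: "lcoset Q w ?Z \<in> carrier ?F" unfolding carF using wc(1) by blast
    have "inv\<^bsub>?F\<^esub> g' = lcoset Q w ?Z" by (rule group.inv_equality[OF grp e g'(1) m])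
    show ?case
    proof (rule bexI)
      show "inv\<^bsub>?F\<^esub> h = lcoset Q w ?Z" using hg \<open>inv\<^bsub>?F\<^esub> g' = lcoset Q w ?Z\<close> by simp
      show "w \<in> ?H" by (rule wH)
    qed
  next
    case (eng h1 h2)
    obtain a where a: "a \<in> ?H" "h1 = lcoset Q a ?Z" using eng.IH(1) by blast
    obtain b where b: "b \<in> ?H" "h2 = lcoset Q b ?Z" using eng.IH(2) by blast
    have "h1 \<otimes>\<^bsub>?F\<^esub> h2 = lcoset Q (a \<otimes>\<^bsub>Q\<^esub> b) ?Z"
      unfolding a(2) b(2) by (rule F_mult[OF L H_sub[OF L g(1) a(1)] H_sub[OF L g(1) b(1)]])
    show ?case
    proof (rule bexI)
      show "h1 \<otimes>\<^bsub>?F\<^esub> h2 = lcoset Q (a \<otimes>\<^bsub>Q\<^esub> b) ?Z" by fact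
      show "a \<otimes>\<^bsub>Q\<^esub> b \<in> ?H" by (rule subloop_gen.mult[OF a(1) b(1)])
    qed
  qed
  have decomp: "\<exists>h\<in>?H. \<exists>z\<in>?Z. x = h \<otimes>\<^bsub>Q\<^esub> z" if x: "x \<in> carrier Q" for x
  proof -
    have "lcoset Q x ?Z \<in> carrier ?F" unfolding carF using x by blast
    then have "lcoset Q x ?Z \<in> generate ?F {g'}" unfolding g'(2) .
    then obtain h where h: "h \<in> ?H" "lcoset Q x ?Z = lcoset Q h ?Z" using claim by blast
    have "\<exists>z\<in>?Z. x = h \<otimes>\<^bsub>Q\<^esub> z" by (rule lcoset_eq[OF L H_sub[OF L g(1) h(1)] x h(2)[symmetric]])
    then show ?thesis using h(1) by blast
  qed
  note mc = m_cl[OF L] and Hs = H_sub[OF L g(1)] and Zcc = Zc[OF L] and Zm' = Zmult[OF L]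
  show ?thesis
  proof (rule comm_groupI)
    show "\<one>\<^bsub>Q\<^esub> \<in> carrier Q" by (rule one_cl[OF L])
    show "x \<otimes>\<^bsub>Q\<^esub> y \<in> carrier Q" if "x \<in> carrier Q" "y \<in> carrier Q" for x y using that mc by blast
    show "\<one>\<^bsub>Q\<^esub> \<otimes>\<^bsub>Q\<^esub> x = x" if "x \<in> carrier Q" for x using that l_one'[OF L] by blast
    show "\<exists>y\<in>carrier Q. y \<otimes>\<^bsub>Q\<^esub> x = \<one>\<^bsub>Q\<^esub>" if "x \<in> carrier Q" for x
      using rdiv_prop[OF L that one_cl[OF L]] by blast
    show "x \<otimes>\<^bsub>Q\<^esub> y \<otimes>\<^bsub>Q\<^esub> w = x \<otimes>\<^bsub>Q\<^esub> (y \<otimes>\<^bsub>Q\<^esub> w)"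
      if xyw: "x \<in> carrier Q" "y \<in> carrier Q" "w \<in> carrier Q" for x y w
    proof -
      obtain h1 z1 where 1: "h1 \<in> ?H" "z1 \<in> ?Z" "x = h1 \<otimes>\<^bsub>Q\<^esub> z1" using decomp[OF xyw(1)] by blast
      obtain h2 z2 where 2: "h2 \<in> ?H" "z2 \<in> ?Z" "y = h2 \<otimes>\<^bsub>Q\<^esub> z2" using decomp[OF xyw(2)] by blast
      obtain h3 z3 where 3: "h3 \<in> ?H" "z3 \<in> ?Z" "w = h3 \<otimes>\<^bsub>Q\<^esub> z3" using decomp[OF xyw(3)] by blast
      have "x \<otimes>\<^bsub>Q\<^esub> y \<otimes>\<^bsub>Q\<^esub> w = ((h1 \<otimes>\<^bsub>Q\<^esub> h2) \<otimes>\<^bsub>Q\<^esub> h3) \<otimes>\<^bsub>Q\<^esub> ((z1 \<otimes>\<^bsub>Q\<^esub> z2) \<otimes>\<^bsub>Q\<^esub> z3)"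
        unfolding 1(3) 2(3) 3(3) mult_ZZ[OF L Hs[OF 1(1)] Hs[OF 2(1)] 1(2) 2(2)]
          mult_ZZ[OF L mc[OF Hs[OF 1(1)] Hs[OF 2(1)]] Hs[OF 3(1)] Zm'[OF 1(2) 2(2)] 3(2)] ..
      also have "\<dots> = (h1 \<otimes>\<^bsub>Q\<^esub> (h2 \<otimes>\<^bsub>Q\<^esub> h3)) \<otimes>\<^bsub>Q\<^esub> (z1 \<otimes>\<^bsub>Q\<^esub> (z2 \<otimes>\<^bsub>Q\<^esub> z3))"
        unfolding H_assoc[OF L P g(1) 1(1) 2(1) 3(1)] Zl[OF L 1(2) Zcc[OF 2(2)] Zcc[OF 3(2)]] ..
      also have "\<dots> = x \<otimes>\<^bsub>Q\<^esub> (y \<otimes>\<^bsub>Q\<^esub> w)"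
        unfolding 1(3) 2(3) 3(3) mult_ZZ[OF L Hs[OF 2(1)] Hs[OF 3(1)] 2(2) 3(2)]
          mult_ZZ[OF L Hs[OF 1(1)] mc[OF Hs[OF 2(1)] Hs[OF 3(1)]] 1(2) Zm'[OF 2(2) 3(2)]] ..
      finally show ?thesis .
    qed
    show "x \<otimes>\<^bsub>Q\<^esub> y = y \<otimes>\<^bsub>Q\<^esub> x" if xyw: "x \<in> carrier Q" "y \<in> carrier Q" for x y
    proof -
      obtain h1 z1 where 1: "h1 \<in> ?H" "z1 \<in> ?Z" "x = h1 \<otimes>\<^bsub>Q\<^esub> z1" using decomp[OF xyw(1)] by blast
      obtain h2 z2 where 2: "h2 \<in> ?H" "z2 \<in> ?Z" "y = h2 \<otimes>\<^bsub>Q\<^esub> z2" using decomp[OF xyw(2)] by blast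
      have "x \<otimes>\<^bsub>Q\<^esub> y = (h1 \<otimes>\<^bsub>Q\<^esub> h2) \<otimes>\<^bsub>Q\<^esub> (z1 \<otimes>\<^bsub>Q\<^esub> z2)"
        unfolding 1(3) 2(3) by (rule mult_ZZ[OF L Hs[OF 1(1)] Hs[OF 2(1)] 1(2) 2(2)])
      also have "h1 \<otimes>\<^bsub>Q\<^esub> h2 = h2 \<otimes>\<^bsub>Q\<^esub> h1" by (rule H_comm[OF L P g(1) 1(1) 2(1)])
      also have "z1 \<otimes>\<^bsub>Q\<^esub> z2 = z2 \<otimes>\<^bsub>Q\<^esub> z1" by (rule Zcomm[OF L 1(2) Zcc[OF 2(2)]])
      also have "(h2 \<otimes>\<^bsub>Q\<^esub> h1) \<otimes>\<^bsub>Q\<^esub> (z2 \<otimes>\<^bsub>Q\<^esub> z1) = y \<otimes>\<^bsub>Q\<^esub> x"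
        unfolding 1(3) 2(3) by (rule mult_ZZ[OF L Hs[OF 2(1)] Hs[OF 1(1)] 2(2) 1(2), symmetric])
      finally show ?thesis .
    qed
  qed
qed

end
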